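(* Suppose Assumptions A1 and A2 hold. Let $\{w_k\}$ be generated from an arbitrary $w_0\in\mathbb{R}^d$ by the subsampled Newton iteration $$w_{k+1}=w_k-\alpha_k\,\nabla^2F_{S_k}(w_k)^{-1}\nabla F_{X_k}(w_k),$$ where $|X_k|=\eta^k$ for some fixed $\eta>1$, $|S_k|=\beta\ge 1$ is a fixed integer, and the steplength is constant, $\alpha_k=\alpha=\mu_\beta/L$. Then for all $k\ge 0$, $$\mathbb{E}[F(w_k)-F(w^* )]\le C\hat\rho^{\,k},$$ where $$C=\max\left\{F(w_0)-F(w^* ),\ \frac{v^2L_\beta}{\mu\mu_\beta}\right\},\qquad \hat\rho=\max\left\{1-\frac{\mu\mu_\beta}{2LL_\beta},\ \frac1\eta\right\}.$$
   Context: Setting: $P$ is a probability distribution on input–output pairs $(x,y)$, $f(w;x,y)$ is a smooth loss, and $F(w)=\int f(w;x,y)\,dP(x,y)$ for $w\in\mathbb{R}^d$ (expected risk). Sample points $(x^i,y^i)$, $i=1,2,\dots$, are drawn independently from $P$, and $F_i(w)=f(w;x^i,y^i)$, so that $\mathbb{E}[\nabla F_i(w)]=\nabla F(w)$ and $\mathbb{E}[\nabla^2F_i(w)]=\nabla^2F(w)$. For a finite index set $S$, $\nabla F_S(w)=\frac1{|S|}\sum_{i\in S}\nabla F_i(w)$ and $\nabla^2F_S(w)=\frac1{|S|}\sum_{i\in S}\nabla^2F_i(w)$. At each iteration the gradient sample $X_k$ and Hessian sample $S_k$ are index sets of independently drawn sample points, chosen independently of each other and of the past iterates, so that $\mathbb{E}[\nabla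 F_{X_k}(w_k)\mid w_k]=\nabla F(w_k)$. $w^*$ denotes the unique minimizer of $F$; $\|\cdot\|$ is the Euclidean norm or induced matrix norm; $A\preceq B$ means $B-A$ is symmetric positive semidefinite. Assumption A1: $F$ is twice continuously differentiable; for every positive integer $\beta$ there are constants $0<\mu_\beta\le L_\beta$ such that for every index set $S$ with $|S|=\beta$, $\mu_\beta I\preceq\nabla^2F_S(w)\preceq L_\beta I$ for all $w$; there are constants $0<\bar\mu\le\mu_\beta$ and $L_\beta\le\bar L<\infty$ for all $\beta$; and $\mu I\preceq\nabla^2F(w)\preceq LI$ for all $w$, with $0<\mu\le L<\infty$. Assumption A2: there is $v$ with $\operatorname{tr}(\operatorname{Cov}(\nabla F_i(w)))\le v^2$ for all $w$. *)

theory Defs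
  imports "HOL-Probability.Probability"
begin

definition loewner_le :: "real^'n^'n \<Rightarrow> real^'n^'n \<Rightarrow> bool" where
  "loewner_le A B \<longleftrightarrow> transpose (B - A) = B - A \<and> (\<forall>u. 0 \<le> u \<bullet> ((B - A) *v u))"

definition tr_cov :: "'z measure \<Rightarrow> ('z \<Rightarrow> real^'n) \<Rightarrow> real" where
  "tr_cov P G = (\<Sum>i\<in>UNIV. \<integral>z. (G z $ i - (\<integral>z'. G z' $ i \<partial>P))^2 \<partial>P)"

text \<open>Subsampled Newton iteration. Sample points are Z (True,k,j) (j < nX k) for the
  gradient sample X_k and Z (False,k,j) (j < b) for the Hessian sample S_k.\<close>
fun sn_iter :: "('z \<Rightarrow> real^'n \<Rightarrow> real^'n) \<Rightarrow> ('z \<Rightarrow> real^'n \<Rightarrow> real^'n^'n)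
    \<Rightarrow> (bool \<times> nat \<times> nat \<Rightarrow> 'w \<Rightarrow> 'z) \<Rightarrow> (nat \<Rightarrow> nat) \<Rightarrow> nat \<Rightarrow> real \<Rightarrow> real^'n
    \<Rightarrow> nat \<Rightarrow> 'w \<Rightarrow> real^'n" where
  "sn_iter g H Z nX b \<alpha> w0 0 \<omega> = w0"
| "sn_iter g H Z nX b \<alpha> w0 (Suc k) \<omega> =
     (let wk = sn_iter g H Z nX b \<alpha> w0 k \<omega>;
          gX = (1 / real (nX k)) *\<^sub>R (\<Sum>j<nX k. g (Z (True, k, j) \<omega>) wk);
          HS = (1 / real b) *\<^sub>R (\<Sum>j<b. H (Z (False, k, j) \<omega>) wk)
      in wk - \<alpha> *\<^sub>R (matrix_inv HS *v gX))"

end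

theory Submission
  imports Defs
begin

lemma line_deriv:
  fixes F :: "real^'n \<Rightarrow> real"
  assumes Fd: "\<And>x. (F has_derivative (\<lambda>h. GF x \<bullet> h)) (at x)"
  shows "((\<lambda>t. F (w + t *\<^sub>R d)) has_real_derivative (GF (w + t *\<^sub>R d) \<bullet> d)) (at t)"
proof -
  have l: "((\<lambda>t. w + t *\<^sub>R d) has_derivative (\<lambda>h. h *\<^sub>R d)) (at t)"
    by (auto intro!: derivative_eq_intros)
  have "((\<lambda>t. F (w + t *\<^sub>R d)) has_derivative (\<lambda>h. GF (w + t *\<^sub>R d) \<bullet> (h *\<^sub>R d))) (at t)"
    by (rule has_derivative_compose[OF l Fd])
  moreover have "(\<lambda>h. GF (w + t *\<^sub>R d) \<bullet> (h *\<^sub>R d)) = (*) (GF (w + t *\<^sub>R d) \<bullet> d)"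
    by (auto simp: fun_eq_iff)
  ultimately show ?thesis by (simp add: has_field_derivative_def)
qed

lemma line_deriv2:
  fixes GF :: "real^'n \<Rightarrow> real^'n"
  assumes Gd: "\<And>x. (GF has_derivative (\<lambda>h. HF x *v h)) (at x)"
  shows "((\<lambda>t. GF (w + t *\<^sub>R d) \<bullet> d) has_real_derivative (d \<bullet> (HF (w + t *\<^sub>R d) *v d))) (at t)"
proof -
  have l: "((\<lambda>t. w + t *\<^sub>R d) has_derivative (\<lambda>h. h *\<^sub>R d)) (at t)"
    by (auto intro!: derivative_eq_intros)
  have "((\<lambda>t. GF (w + t *\<^sub>R d)) has_derivative (\<lambda>h. HF (w + t *\<^sub>R d) *v (h *\<^sub>R d))) (at t)"
    by (rule has_derivative_compose[OF l Gd])
  then have "((\<lambda>t. GF (w + t *\<^sub>R d) \<bullet> d) has_derivative (\<lambda>h. (HF (w + t *\<^sub>R d) *v (h *\<^sub>R d)) \<bullet> d)) (at t)"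
    by (auto intro!: derivative_eq_intros)
  moreover have "(\<lambda>h. (HF (w + t *\<^sub>R d) *v (h *\<^sub>R d)) \<bullet> d) = (*) (d \<bullet> (HF (w + t *\<^sub>R d) *v d))"
    by (auto simp: fun_eq_iff matrix_vector_mult_scaleR inner_commute)
  ultimately show ?thesis by (simp add: has_field_derivative_def)
qed

lemma quad_upper:
  fixes F :: "real^'n \<Rightarrow> real"
  assumes Fd: "\<And>x. (F has_derivative (\<lambda>h. GF x \<bullet> h)) (at x)"
  and Gd: "\<And>x. (GF has_derivative (\<lambda>h. HF x *v h)) (at x)"
  and ub: "\<And>x u. u \<bullet> (HF x *v u) \<le> c * (u \<bullet> u)"
  shows "F (w + d) \<le> F w + GF w \<bullet> d + c/2 * (d \<bullet> d)"
proof -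
  define \<psi> where "\<psi> t = GF (w + t *\<^sub>R d) \<bullet> d - GF w \<bullet> d - c * t * (d\<bullet>d)" for t
  have d\<psi>: "DERIV \<psi> t :> (d \<bullet> (HF (w + t*\<^sub>R d) *v d) - c*(d\<bullet>d))" for t
    unfolding \<psi>_def
    by (auto intro!: derivative_eq_intros line_deriv2[OF Gd])
  have \<psi>le: "\<psi> t \<le> 0" if "t \<ge> 0" for t
  proof -
    have "\<psi> 0 \<ge> \<psi> t"
    proof (rule DERIV_nonpos_imp_nonincreasing[OF that])
      fix x show "\<exists>y. DERIV \<psi> x :> y \<and> y \<le> 0"
        using d\<psi>[of x] ub[where x="w + x *\<^sub>R d" and u=d] by (intro exI[of _ "d \<bullet> (HF (w + x*\<^sub>R d) *v d) - c*(d\<bullet>d)"]) auto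
    qed
    then show ?thesis by (simp add: \<psi>_def)
  qed
  define \<phi> where "\<phi> t = F (w + t*\<^sub>R d) - F w - t*(GF w \<bullet> d) - c/2 * t^2 * (d\<bullet>d)" for t
  have d\<phi>: "DERIV \<phi> t :> \<psi> t" for t
    unfolding \<phi>_def \<psi>_def
    by (auto intro!: derivative_eq_intros line_deriv[OF Fd] simp: algebra_simps)
  have "\<phi> 0 \<ge> \<phi> 1"
    by (rule DERIV_nonpos_imp_nonincreasing) (use d\<phi> \<psi>le in auto)
  then show ?thesis by (simp add: \<phi>_def)
qed

lemma neg_mv: "(- A) *v (x::real^'n) = - (A *v x)"
  by (simp add: vec_eq_iff matrix_vector_mult_def sum_negf)

lemma quad_lower:
  fixes F :: "real^'n \<Rightarrow> real"
  assumes Fd: "\<And>x. (F has_derivative (\<lambda>h. GF x \<bullet> h)) (at x)"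
  and Gd: "\<And>x. (GF has_derivative (\<lambda>h. HF x *v h)) (at x)"
  and lb: "\<And>x u. m * (u \<bullet> u) \<le> u \<bullet> (HF x *v u)"
  shows "F w + GF w \<bullet> d + m/2 * (d \<bullet> d) \<le> F (w + d)"
proof -
  have Fd': "((\<lambda>x. - F x) has_derivative (\<lambda>h. (- GF x) \<bullet> h)) (at x)" for x
    using has_derivative_minus[OF Fd[of x]] by simp
  have Gd': "((\<lambda>x. - GF x) has_derivative (\<lambda>h. (- HF x) *v h)) (at x)" for x
    using has_derivative_minus[OF Gd[of x]] by (simp add: neg_mv)
  have ub': "u \<bullet> ((- HF x) *v u) \<le> (-m) * (u \<bullet> u)" for x u
    using lb[of u x] by (simp add: neg_mv)
  have "- F (w + d) \<le> - F w + (- GF w) \<bullet> d + (-m)/2 * (d \<bullet> d)"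
    by (rule quad_upper[OF Fd' Gd' ub'])
  then show ?thesis by simp
qed

lemma PL_ineq:
  fixes F :: "real^'n \<Rightarrow> real"
  assumes Fd: "\<And>x. (F has_derivative (\<lambda>h. GF x \<bullet> h)) (at x)"
  and Gd: "\<And>x. (GF has_derivative (\<lambda>h. HF x *v h)) (at x)"
  and lb: "\<And>x u. m * (u \<bullet> u) \<le> u \<bullet> (HF x *v u)"
  and m: "m > 0"
  and ws: "\<And>x. F ws \<le> F x"
  shows "2 * m * (F w - F ws) \<le> GF w \<bullet> GF w"
proof -
  define d where "d = ws - w"
  have "F w + GF w \<bullet> d + m/2 * (d \<bullet> d) \<le> F (w + d)"
    by (rule quad_lower[OF Fd Gd lb])
  also have "w + d = ws" by (simp add: d_def)
  finally have 1: "F w + GF w \<bullet> d + m/2 * (d \<bullet> d) \<le> F ws" .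
  have 2: "0 \<le> (GF w + m *\<^sub>R d) \<bullet> (GF w + m *\<^sub>R d)" by simp
  have 3: "(GF w + m *\<^sub>R d) \<bullet> (GF w + m *\<^sub>R d) = GF w \<bullet> GF w + 2 * m * (GF w \<bullet> d) + m*m*(d\<bullet>d)"
    by (simp add: algebra_simps inner_commute)
  have 4: "2*m*(GF w \<bullet> d + m/2 * (d \<bullet> d)) \<le> 2*m*(F ws - F w)"
    using 1 m by (intro mult_left_mono) auto
  have 5: "2*m*(GF w \<bullet> d + m/2 * (d \<bullet> d)) = 2 * m * (GF w \<bullet> d) + m*m*(d\<bullet>d)"
    by (simp add: algebra_simps)
  have 6: "2*m*(F ws - F w) = - (2 * m * (F w - F ws))" by (simp add: algebra_simps)
  from 2 3 4 5 6 show ?thesis by linarith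
qed

lemma loewner_lowerD:
  fixes A :: "real^'n^'n"
  assumes "loewner_le (m *\<^sub>R mat 1) A"
  shows "transpose A = A" "m * (u \<bullet> u) \<le> u \<bullet> (A *v u)"
proof -
  from assms have t: "transpose (A - m *\<^sub>R mat 1) = A - m *\<^sub>R mat 1"
    and p: "0 \<le> u \<bullet> ((A - m *\<^sub>R mat 1) *v u)"
    by (auto simp: loewner_le_def)
  from t have tt: "\<forall>i j. A$j$i - m*(if j=i then 1 else 0) = A$i$j - m*(if i=j then 1 else 0)"
    by (simp add: vec_eq_iff transpose_def mat_def)
  have "A$j$i = A$i$j" for i j using tt[rule_format, of i j] by (cases "i = j") (auto split: if_splits)
  then show "transpose A = A"
    by (auto simp: vec_eq_iff transpose_def)
  from p show "m * (u \<bullet> u) \<le> u \<bullet> (A *v u)"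
    by (simp add: matrix_vector_mult_diff_rdistrib inner_diff_right 
         flip: scaleR_matrix_vector_assoc)
qed

lemma loewner_upperD:
  fixes A :: "real^'n^'n"
  assumes "loewner_le A (m *\<^sub>R mat 1)"
  shows "u \<bullet> (A *v u) \<le> m * (u \<bullet> u)"
proof -
  from assms have p: "0 \<le> u \<bullet> ((m *\<^sub>R mat 1 - A) *v u)"
    by (auto simp: loewner_le_def)
  then show ?thesis
    by (simp add: matrix_vector_mult_diff_rdistrib inner_diff_right 
         flip: scaleR_matrix_vector_assoc)
qed

lemma sym_inner:
  fixes A :: "real^'n^'n"
  assumes "transpose A = A"
  shows "x \<bullet> (A *v y) = (A *v x) \<bullet> y"
proof -
  have "x \<bullet> (A *v y) = (x v* A) \<bullet> y" by (simp add: dot_lmul_matrix)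
  also have "x v* A = transpose A *v x"
    by (simp add: vec_eq_iff vector_matrix_mult_def matrix_vector_mult_def transpose_def mult.commute)
  finally show ?thesis using assms by simp
qed

lemma mv_scaleR: "A *v (t *\<^sub>R y) = t *\<^sub>R (A *v (y::real^'n))"
  by (simp add: vec_eq_iff matrix_vector_mult_def sum_distrib_left algebra_simps)

lemma quad_expand:
  fixes A :: "real^'n^'n"
  assumes "transpose A = A"
  shows "(x + t *\<^sub>R y) \<bullet> (A *v (x + t *\<^sub>R y)) = x \<bullet> (A *v x) + 2 * t * (x \<bullet> (A *v y)) + t^2 * (y \<bullet> (A *v y))"
proof -
  have s: "y \<bullet> (A *v x) = x \<bullet> (A *v y)"
    using sym_inner[OF assms, of y x] by (simp add: inner_commute)
  show ?thesis
    by (simp add: matrix_vector_right_distrib mv_scaleR inner_add_left inner_add_right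
        s power2_eq_square algebra_simps del: scaleR_matrix_vector_assoc)
qed

lemma CS_psd:
  fixes A :: "real^'n^'n"
  assumes sym: "transpose A = A" and lb: "\<And>u. m * (u \<bullet> u) \<le> u \<bullet> (A *v u)" and m: "m > 0"
  shows "(x \<bullet> (A *v y))^2 \<le> (x \<bullet> (A *v x)) * (y \<bullet> (A *v y))"
proof (cases "y = 0")
  case True then show ?thesis by simp
next
  case False
  have "m * (y \<bullet> y) > 0" using False m by simp
  then have qy: "y \<bullet> (A *v y) > 0" using lb[of y] by linarith
  define t where "t = - (x \<bullet> (A *v y)) / (y \<bullet> (A *v y))"
  have "0 \<le> m * ((x + t *\<^sub>R y) \<bullet> (x + t *\<^sub>R y))" using m by simp
  also have "\<dots> \<le> (x + t *\<^sub>R y) \<bullet> (A *v (x + t *\<^sub>R y))" by (rule lb)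
  also have "\<dots> = x \<bullet> (A *v x) + 2 * t * (x \<bullet> (A *v y)) + t^2 * (y \<bullet> (A *v y))"
    by (rule quad_expand[OF sym])
  also have "\<dots> = x \<bullet> (A *v x) - (x \<bullet> (A *v y))^2 / (y \<bullet> (A *v y))"
    using qy by (simp add: t_def power2_eq_square field_simps)
  finally have "(x \<bullet> (A *v y))^2 / (y \<bullet> (A *v y)) \<le> x \<bullet> (A *v x)" by simp
  then show ?thesis using qy by (simp add: divide_le_eq mult.commute)
qed

lemma key_mat:
  fixes A :: "real^'n^'n"
  assumes sym: "transpose A = A" and lb: "\<And>u. m * (u \<bullet> u) \<le> u \<bullet> (A *v u)" and m: "m > 0"
    and ub: "\<And>u. u \<bullet> (A *v u) \<le> M * (u \<bullet> u)" and M: "M > 0"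
    and p: "A *v p = G"
  shows "G \<bullet> G / M - (A *v y - G) \<bullet> (A *v y - G) / m \<le> 2 * (G \<bullet> y) - y \<bullet> (A *v y)"
proof -
  define q where "q = y - p"
  have y: "y = p + q" by (simp add: q_def)
  have Aq: "A *v q = A *v y - G" by (simp add: q_def p matrix_vector_mult_diff_distrib)
  have s1: "q \<bullet> (A *v p) = p \<bullet> (A *v q)"
    using sym_inner[OF sym, of q p] by (simp add: inner_commute)
  have e1: "2 * (G \<bullet> y) - y \<bullet> (A *v y) = p \<bullet> (A *v p) - q \<bullet> (A *v q)"
  proof -
    have "G \<bullet> y = p \<bullet> (A *v y)" using sym_inner[OF sym, of p y] p by simp
    then show ?thesis
      by (simp add: y matrix_vector_right_distrib inner_add_left inner_add_right s1)
  qed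
  have e2: "G \<bullet> G / M \<le> p \<bullet> (A *v p)"
  proof -
    let ?s = "(A *v p) \<bullet> (A *v p)"
    have pp: "0 \<le> p \<bullet> (A *v p)" using lb[of p] m by (smt (verit) inner_ge_zero mult_nonneg_nonneg)
    have "?s^2 \<le> ((A *v p) \<bullet> (A *v (A *v p))) * (p \<bullet> (A *v p))"
      using CS_psd[OF sym lb m, of "A *v p" p] by simp
    also have "\<dots> \<le> (M * ?s) * (p \<bullet> (A *v p))"
      by (intro mult_right_mono ub pp)
    finally have *: "?s * ?s \<le> (M * (p \<bullet> (A *v p))) * ?s" by (simp add: power2_eq_square algebra_simps)
    have "?s \<le> M * (p \<bullet> (A *v p))"
    proof (cases "?s = 0")
      case True then show ?thesis using pp M by simp
    next
      case False then have "?s > 0" by (simp add: order_less_le)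
      then show ?thesis using * by simp
    qed
    then show ?thesis using M p by (simp add: divide_le_eq mult.commute)
  qed
  have e3: "q \<bullet> (A *v q) \<le> (A *v q) \<bullet> (A *v q) / m"
  proof -
    let ?a = "norm q" and ?b = "norm (A *v q)"
    have cs: "q \<bullet> (A *v q) \<le> ?a * ?b" by (rule norm_cauchy_schwarz)
    have "m * ?a^2 \<le> ?a * ?b" using lb[of q] cs by (simp add: power2_norm_eq_inner)
    then have "m * ?a * ?b \<le> ?b^2"
    proof (cases "?a = 0")
      case True then show ?thesis by simp
    next
      case False then have "?a > 0" by simp
      from \<open>m * ?a^2 \<le> ?a * ?b\<close> have "?a * (m * ?a) \<le> ?a * ?b" by (simp add: power2_eq_square algebra_simps)
      then have "m * ?a \<le> ?b" using \<open>?a > 0\<close> by simp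
      then show ?thesis by (simp add: power2_eq_square mult_right_mono)
    qed
    then have "?a * ?b \<le> ?b^2 / m" using m by (simp add: le_divide_eq algebra_simps)
    then show ?thesis using cs by (simp add: power2_norm_eq_inner)
  qed
  show ?thesis using e1 e2 e3 Aq by simp
qed

lemma matrix_inv_props:
  fixes A :: "real^'n^'n"
  assumes "invertible A"
  shows "A ** matrix_inv A = mat 1" "matrix_inv A ** A = mat 1" "A *v (matrix_inv A *v v) = v"
proof -
  from assms obtain B where "A ** B = mat 1 \<and> B ** A = mat 1" unfolding invertible_def by blast
  then have "A ** matrix_inv A = mat 1 \<and> matrix_inv A ** A = mat 1"
    unfolding matrix_inv_def by (rule someI)
  then show "A ** matrix_inv A = mat 1" "matrix_inv A ** A = mat 1" by auto
  then show "A *v (matrix_inv A *v v) = v" by (simp add: matrix_vector_mul_assoc)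
qed

lemma step_ineq:
  fixes F :: "real^'n \<Rightarrow> real" and A :: "real^'n^'n"
  assumes Fd: "\<And>x. (F has_derivative (\<lambda>h. GF x \<bullet> h)) (at x)"
  and Gd: "\<And>x. (GF has_derivative (\<lambda>h. HF x *v h)) (at x)"
  and Hlb: "\<And>x u. mu * (u \<bullet> u) \<le> u \<bullet> (HF x *v u)"
  and Hub: "\<And>x u. u \<bullet> (HF x *v u) \<le> L * (u \<bullet> u)"
  and mu: "mu > 0" and L: "L > 0"
  and ws: "\<And>x. F ws \<le> F x"
  and sym: "transpose A = A" and Alb: "\<And>u. mb * (u \<bullet> u) \<le> u \<bullet> (A *v u)" and mb: "mb > 0"
  and Aub: "\<And>u. u \<bullet> (A *v u) \<le> Lbb * (u \<bullet> u)" and Lbb: "Lbb > 0"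
  and inv: "invertible A"
  shows "F (w - (mb/L) *\<^sub>R (matrix_inv A *v gX)) - F ws
     \<le> (1 - mu*mb/(L*Lbb)) * (F w - F ws) + (gX - GF w) \<bullet> (gX - GF w) / (2*L)"
proof -
  define \<alpha> where "\<alpha> = mb / L"
  define y where "y = matrix_inv A *v gX"
  define G where "G = GF w"
  define e where "e = gX - G"
  have \<alpha>: "\<alpha> > 0" using mb L by (simp add: \<alpha>_def)
  have Ay: "A *v y = gX" unfolding y_def by (rule matrix_inv_props(3)[OF inv])
  have 1: "F (w + (- \<alpha>) *\<^sub>R y) \<le> F w + G \<bullet> ((- \<alpha>) *\<^sub>R y) + L/2 * (((- \<alpha>) *\<^sub>R y) \<bullet> ((- \<alpha>) *\<^sub>R y))"
    unfolding G_def by (rule quad_upper[OF Fd Gd Hub])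
  have 2: "L/2 * (((- \<alpha>) *\<^sub>R y) \<bullet> ((- \<alpha>) *\<^sub>R y)) = (L/2 * \<alpha>^2) * (y \<bullet> y)"
    by (simp add: power2_eq_square algebra_simps)
  have yy: "y \<bullet> y \<le> (y \<bullet> (A *v y)) / mb" using Alb[of y] mb by (simp add: le_divide_eq mult.commute)
  have 3: "(L/2 * \<alpha>^2) * (y \<bullet> y) \<le> (L/2 * \<alpha>^2) * ((y \<bullet> (A *v y)) / mb)"
    using yy L by (intro mult_left_mono) auto
  have 4: "(L/2 * \<alpha>^2) * ((y \<bullet> (A *v y)) / mb) = \<alpha>/2 * (y \<bullet> (A *v y))"
    using mb L by (simp add: \<alpha>_def power2_eq_square field_simps)
  have 5: "F (w - \<alpha> *\<^sub>R y) \<le> F w - \<alpha>/2 * (2 * (G \<bullet> y) - y \<bullet> (A *v y))"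
  proof -
    have a: "w + (- \<alpha>) *\<^sub>R y = w - \<alpha> *\<^sub>R y" by simp
    have b: "G \<bullet> ((- \<alpha>) *\<^sub>R y) = - (\<alpha> * (G \<bullet> y))" by simp
    have c: "\<alpha>/2 * (2 * (G \<bullet> y) - y \<bullet> (A *v y)) = \<alpha> * (G \<bullet> y) - \<alpha>/2 * (y \<bullet> (A *v y))"
      by (simp add: algebra_simps)
    from 1 show ?thesis unfolding a b c using 2 3 4 by linarith
  qed
  have p: "A *v (matrix_inv A *v G) = G" by (rule matrix_inv_props(3)[OF inv])
  have km: "G \<bullet> G / Lbb - e \<bullet> e / mb \<le> 2 * (G \<bullet> y) - y \<bullet> (A *v y)"
    using key_mat[OF sym Alb mb Aub Lbb p, of y] by (simp add: Ay e_def)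
  have 6: "F (w - \<alpha> *\<^sub>R y) \<le> F w - \<alpha>/2 * (G \<bullet> G / Lbb - e \<bullet> e / mb)"
  proof -
    have "\<alpha>/2 * (G \<bullet> G / Lbb - e \<bullet> e / mb) \<le> \<alpha>/2 * (2 * (G \<bullet> y) - y \<bullet> (A *v y))"
      using km \<alpha> by (intro mult_left_mono) auto
    then show ?thesis using 5 by linarith
  qed
  have pl: "2 * mu * (F w - F ws) \<le> G \<bullet> G"
    unfolding G_def by (rule PL_ineq[OF Fd Gd Hlb mu ws])
  have 7: "\<alpha>/2 * (2 * mu * (F w - F ws) / Lbb) \<le> \<alpha>/2 * (G \<bullet> G / Lbb)"
    using pl \<alpha> Lbb by (intro mult_left_mono divide_right_mono) auto
  have 8: "\<alpha>/2 * (2 * mu * (F w - F ws) / Lbb) = mu*mb/(L*Lbb) * (F w - F ws)"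
    using L Lbb by (simp add: \<alpha>_def field_simps)
  have 9: "\<alpha>/2 * (e \<bullet> e / mb) = e \<bullet> e / (2*L)"
    using mb L by (simp add: \<alpha>_def field_simps)
  have "F (w - \<alpha> *\<^sub>R y) \<le> F w - mu*mb/(L*Lbb) * (F w - F ws) + e \<bullet> e / (2*L)"
    using 6 7 8 9 by (simp add: algebra_simps)
  then show ?thesis by (simp add: \<alpha>_def y_def e_def G_def algebra_simps)
qed

lemma var_mean_bound:
  fixes P :: "'z measure" and M :: "'w measure" and Z :: "'i \<Rightarrow> 'w \<Rightarrow> 'z"
    and g :: "'z \<Rightarrow> real^'n" and \<iota> :: "nat \<Rightarrow> 'i"
  assumes Mp: "prob_space M" and Pp: "prob_space P"
  and ind: "prob_space.indep_vars M (\<lambda>_. P) Z UNIV"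
  and dis: "\<And>i. distr M P (Z i) = P"
  and gm: "g \<in> borel_measurable P"
  and gint: "integrable P g"
  and gsq: "integrable P (\<lambda>z. (norm (g z))\<^sup>2)"
  and mean: "(\<integral>z. g z \<partial>P) = G"
  and tr: "tr_cov P g \<le> v\<^sup>2"
  and inj: "inj \<iota>" and n: "n \<ge> 1"
  shows "(\<integral>\<^sup>+\<omega>. ennreal ((norm ((1/real n) *\<^sub>R (\<Sum>j<n. g (Z (\<iota> j) \<omega>)) - G))\<^sup>2) \<partial>M) \<le> ennreal (v\<^sup>2 / n)"
proof -
  interpret M: prob_space M by (rule Mp)
  interpret P: prob_space P by (rule Pp)
  have Zm: "Z i \<in> measurable M P" for i
    using ind unfolding M.indep_vars_def by auto
  note gm[measurable]
  have gim[measurable]: "(\<lambda>z. g z $ i) \<in> borel_measurable P" for i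
    by (rule measurable_compose[OF gm borel_measurable_nth])
  define h where "h i z = g z $ i - G $ i" for i z
  have hm[measurable]: "h i \<in> borel_measurable P" for i unfolding h_def by measurable
  have gi: "integrable P (\<lambda>z. g z $ i)" for i
    using integrable_inner_left[OF gint, of "axis i 1"] by (simp add: cart_eq_inner_axis)
  have gmean: "(\<integral>z. g z $ i \<partial>P) = G $ i" for i
    using integral_inner_left[of "axis i 1" P g] gint mean by (simp add: cart_eq_inner_axis)
  have hi: "integrable P (h i)" for i unfolding h_def using gi by simp
  have hmean: "(\<integral>z. h i z \<partial>P) = 0" for i
    unfolding h_def using gi gmean by (simp add: P.prob_space)
  have gsqi: "integrable P (\<lambda>z. (g z $ i)\<^sup>2)" for i
  proof (rule Bochner_Integration.integrable_bound[OF gsq])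
    show "(\<lambda>z. (g z $ i)\<^sup>2) \<in> borel_measurable P" using gm by measurable
    show "AE x in P. norm ((g x $ i)\<^sup>2) \<le> norm ((norm (g x))\<^sup>2)"
    proof (rule AE_I2)
      fix x
      have "\<bar>g x $ i\<bar> \<le> norm (g x)" by (rule component_le_norm_cart)
      then have "(g x $ i)\<^sup>2 \<le> (norm (g x))\<^sup>2"
        by (metis abs_ge_zero power2_abs power_mono)
      then show "norm ((g x $ i)\<^sup>2) \<le> norm ((norm (g x))\<^sup>2)" by simp
    qed
  qed
  have hsqi: "integrable P (\<lambda>z. h i z * h i z)" for i
  proof -
    have "(\<lambda>z. h i z * h i z) = (\<lambda>z. (g z $ i)\<^sup>2 - 2 * G $ i * g z $ i + (G $ i)\<^sup>2)"
      by (auto simp: h_def power2_eq_square algebra_simps)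
    then show ?thesis using gsqi gi by simp
  qed
  define c where "c i = (\<integral>z. h i z * h i z \<partial>P)" for i
  have trc: "(\<Sum>i\<in>UNIV. c i) = tr_cov P g"
    unfolding tr_cov_def c_def h_def gmean by (simp add: power2_eq_square)
  have XM: "integrable M (\<lambda>\<omega>. h i (Z a \<omega>))" "(\<integral>\<omega>. h i (Z a \<omega>) \<partial>M) = 0" for i a
  proof -
    show "integrable M (\<lambda>\<omega>. h i (Z a \<omega>))"
      using integrable_distr_eq[OF Zm[of a] hm[of i]] hi[of i] dis[of a] by simp
    show "(\<integral>\<omega>. h i (Z a \<omega>) \<partial>M) = 0"
      using integral_distr[OF Zm[of a] hm[of i]] hmean[of i] dis[of a] by simp
  qed
  have XXM: "integrable M (\<lambda>\<omega>. h i (Z a \<omega>) * h i (Z a \<omega>))"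
     "(\<integral>\<omega>. h i (Z a \<omega>) * h i (Z a \<omega>) \<partial>M) = c i" for i a
  proof -
    have m: "(\<lambda>z. h i z * h i z) \<in> borel_measurable P" using hm by measurable
    show "integrable M (\<lambda>\<omega>. h i (Z a \<omega>) * h i (Z a \<omega>))"
      using integrable_distr_eq[OF Zm[of a] m] hsqi[of i] dis[of a] by simp
    show "(\<integral>\<omega>. h i (Z a \<omega>) * h i (Z a \<omega>) \<partial>M) = c i"
      using integral_distr[OF Zm[of a] m] dis[of a] by (simp add: c_def)
  qed
  have indep2: "M.indep_var borel (\<lambda>\<omega>. h i (Z a \<omega>)) borel (\<lambda>\<omega>. h i (Z b \<omega>))" if "a \<noteq> b" for i a b
  proof -
    have r: "M.indep_var (PiM {a} (\<lambda>_. P)) (\<lambda>\<omega>. restrict (\<lambda>i. Z i \<omega>) {a})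
                          (PiM {b} (\<lambda>_. P)) (\<lambda>\<omega>. restrict (\<lambda>i. Z i \<omega>) {b})"
      by (rule M.indep_var_restrict[OF ind]) (use that in auto)
    have m1: "(\<lambda>y. h i (y a)) \<in> measurable (PiM {a} (\<lambda>_. P)) borel"
      using hm by measurable
    have m2: "(\<lambda>y. h i (y b)) \<in> measurable (PiM {b} (\<lambda>_. P)) borel"
      using hm by measurable
    from M.indep_var_compose[OF r m1 m2] show ?thesis by (simp add: comp_def)
  qed
  have cross: "integrable M (\<lambda>\<omega>. h i (Z (\<iota> j) \<omega>) * h i (Z (\<iota> l) \<omega>))"
     "(\<integral>\<omega>. h i (Z (\<iota> j) \<omega>) * h i (Z (\<iota> l) \<omega>) \<partial>M) = (if j = l then c i else 0)" for i j l
  proof -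
    show "integrable M (\<lambda>\<omega>. h i (Z (\<iota> j) \<omega>) * h i (Z (\<iota> l) \<omega>))"
    proof (cases "j = l")
      case True then show ?thesis using XXM by simp
    next
      case False then have "\<iota> j \<noteq> \<iota> l" using inj by (auto dest: injD)
      then show ?thesis using M.indep_var_integrable[OF indep2 XM(1) XM(1)] by blast
    qed
    show "(\<integral>\<omega>. h i (Z (\<iota> j) \<omega>) * h i (Z (\<iota> l) \<omega>) \<partial>M) = (if j = l then c i else 0)"
    proof (cases "j = l")
      case True then show ?thesis using XXM by simp
    next
      case False then have "\<iota> j \<noteq> \<iota> l" using inj by (auto dest: injD)
      then show ?thesis using M.indep_var_lebesgue_integral[OF indep2 XM(1) XM(1)] XM(2) False by simp
    qed
  qed
  define \<phi> where "\<phi> \<omega> = (1 / (real n)^2) * (\<Sum>i\<in>UNIV. \<Sum>j<n. \<Sum>l<n. h i (Z (\<iota> j) \<omega>) * h i (Z (\<iota> l) \<omega>))" for \<omega>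
  have eq: "(norm ((1/real n) *\<^sub>R (\<Sum>j<n. g (Z (\<iota> j) \<omega>)) - G))\<^sup>2 = \<phi> \<omega>" for \<omega>
  proof -
    have n0: "real n \<noteq> 0" using n by simp
    have v: "((1/real n) *\<^sub>R (\<Sum>j<n. g (Z (\<iota> j) \<omega>)) - G) $ i = (1/real n) * (\<Sum>j<n. h i (Z (\<iota> j) \<omega>))" for i
      using n0 by (simp add: h_def sum_component sum_subtractf field_simps)
    show ?thesis
      unfolding power2_norm_eq_inner inner_vec_def v \<phi>_def
      by (simp add: sum_product sum_distrib_left power2_eq_square algebra_simps)
  qed
  have \<phi>i: "integrable M \<phi>" unfolding \<phi>_def using cross(1) by simp
  have \<phi>int: "(\<integral>\<omega>. \<phi> \<omega> \<partial>M) = tr_cov P g / real n"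
  proof -
    have "(\<integral>\<omega>. \<phi> \<omega> \<partial>M) = (1 / (real n)^2) * (\<Sum>i\<in>UNIV. \<Sum>j<n. \<Sum>l<n. (if j = l then c i else 0))"
      unfolding \<phi>_def using cross by (simp add: integral_sum)
    also have "\<dots> = (1 / (real n)^2) * (real n * (\<Sum>i\<in>UNIV. c i))"
      by (simp add: sum_distrib_left)
    also have "\<dots> = tr_cov P g / real n" using n by (simp add: trc power2_eq_square)
    finally show ?thesis .
  qed
  have "(\<integral>\<^sup>+\<omega>. ennreal ((norm ((1/real n) *\<^sub>R (\<Sum>j<n. g (Z (\<iota> j) \<omega>)) - G))\<^sup>2) \<partial>M)
      = (\<integral>\<^sup>+\<omega>. ennreal (\<phi> \<omega>) \<partial>M)" by (simp add: eq)
  also have "\<dots> = ennreal (\<integral>\<omega>. \<phi> \<omega> \<partial>M)"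
    by (rule nn_integral_eq_integral[OF \<phi>i]) (simp add: eq[symmetric])
  also have "\<dots> \<le> ennreal (v\<^sup>2 / n)"
    unfolding \<phi>int using tr n by (intro ennreal_leI divide_right_mono) auto
  finally show ?thesis .
qed

lemma meas_nth[measurable (raw)]:
  fixes f :: "'a \<Rightarrow> real^'n^'m"
  assumes "f \<in> borel_measurable M"
  shows "(\<lambda>x. f x $ i) \<in> borel_measurable M"
  by (rule measurable_compose[OF assms borel_measurable_continuous_onI[OF continuous_on_component[OF continuous_on_id]]])

lemma meas_nth1[measurable (raw)]:
  fixes f :: "'a \<Rightarrow> real^'n"
  assumes "f \<in> borel_measurable M"
  shows "(\<lambda>x. f x $ i) \<in> borel_measurable M"
  by (rule measurable_compose[OF assms borel_measurable_nth])

lemma meas_vec: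
  fixes f :: "'a \<Rightarrow> real^'n"
  assumes "\<And>i. (\<lambda>x. f x $ i) \<in> borel_measurable M"
  shows "f \<in> borel_measurable M"
proof (subst borel_measurable_euclidean_space, intro ballI)
  fix b :: "real^'n" assume "b \<in> Basis"
  then obtain i where b: "b = axis i 1" by (auto simp: Basis_vec_def)
  show "(\<lambda>x. f x \<bullet> b) \<in> borel_measurable M"
    unfolding b using assms[of i] by (simp add: inner_axis)
qed

lemma det_meas:
  fixes B :: "'a \<Rightarrow> real^'n^'n"
  assumes "\<And>i j. (\<lambda>x. B x $ i $ j) \<in> borel_measurable M"
  shows "(\<lambda>x. det (B x)) \<in> borel_measurable M"
  unfolding det_def using assms
  by (intro borel_measurable_sum borel_measurable_times borel_measurable_const borel_measurable_prod) auto

definition crm :: "real^'n^'n \<Rightarrow> real^'n \<Rightarrow> real^'n" where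
  "crm A v = (\<chi> k. det (\<chi> i j. if j = k then v$i else A$i$j) / det A)"

lemma crm_meas:
  fixes A :: "'a \<Rightarrow> real^'n^'n" and v :: "'a \<Rightarrow> real^'n"
  assumes [measurable]: "A \<in> borel_measurable M" "v \<in> borel_measurable M"
  shows "(\<lambda>x. crm (A x) (v x)) \<in> borel_measurable M"
proof (rule meas_vec)
  fix k
  have "(\<lambda>x. det (\<chi> i j. if j = k then v x $ i else A x $ i $ j)) \<in> borel_measurable M"
    by (rule det_meas) simp
  moreover have "(\<lambda>x. det (A x)) \<in> borel_measurable M"
    by (rule det_meas) simp
  ultimately show "(\<lambda>x. crm (A x) (v x) $ k) \<in> borel_measurable M"
    unfolding crm_def by simp
qed

lemma crm_eq:
  fixes A :: "real^'n^'n"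
  assumes "det A \<noteq> 0"
  shows "matrix_inv A *v v = crm A v"
proof -
  have "invertible A" using assms by (simp add: invertible_det_nz)
  then have "A *v (matrix_inv A *v v) = v" by (rule matrix_inv_props(3))
  then show ?thesis using cramer[OF assms] unfolding crm_def by blast
qed

lemma sn_iter_dep:
  assumes "\<And>i. fst (snd i) < k \<Longrightarrow> Z i \<omega> = Z' i \<omega>'"
  shows "sn_iter g H Z nX b \<alpha> w0 k \<omega> = sn_iter g H Z' nX b \<alpha> w0 k \<omega>'"
  using assms
proof (induction k)
  case 0 then show ?case by simp
next
  case (Suc k)
  have IH: "sn_iter g H Z nX b \<alpha> w0 k \<omega> = sn_iter g H Z' nX b \<alpha> w0 k \<omega>'"
    using Suc by auto
  have a: "Z (True, k, j) \<omega> = Z' (True, k, j) \<omega>'" "Z (False, k, j) \<omega> = Z' (False, k, j) \<omega>'" for j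
    using Suc.prems by auto
  show ?case by (simp add: Let_def IH a)
qed

lemma comp_meas:
  fixes g :: "'z \<Rightarrow> 'b::topological_space \<Rightarrow> 'c::topological_space"
  assumes gm: "(\<lambda>(z,w). g z w) \<in> borel_measurable (P \<Otimes>\<^sub>M borel)"
  and f: "f \<in> measurable N P" and \<Phi>: "\<Phi> \<in> borel_measurable N"
  shows "(\<lambda>h. g (f h) (\<Phi> h)) \<in> borel_measurable N"
proof -
  have "(\<lambda>h. (f h, \<Phi> h)) \<in> measurable N (P \<Otimes>\<^sub>M borel)"
    by (rule measurable_Pair[OF f \<Phi>])
  from measurable_compose[OF this gm] show ?thesis by simp
qed

lemma Phi_meas:
  fixes g :: "'z \<Rightarrow> real^'n \<Rightarrow> real^'n" and H :: "'z \<Rightarrow> real^'n \<Rightarrow> real^'n^'n"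
  assumes gm: "(\<lambda>(z,w). g z w) \<in> borel_measurable (P \<Otimes>\<^sub>M borel)"
  and Hm: "(\<lambda>(z,w). H z w) \<in> borel_measurable (P \<Otimes>\<^sub>M borel)"
  and posdef: "\<And>f w. (\<And>j. j < b \<Longrightarrow> f j \<in> space P) \<Longrightarrow> det ((1/real b) *\<^sub>R (\<Sum>j<b. H (f j) w)) \<noteq> 0"
  shows "{i. fst (snd i) < k} \<subseteq> S \<Longrightarrow>
    (\<lambda>h. sn_iter g H (\<lambda>i h. h i) nX b \<alpha> w0 k h) \<in> borel_measurable (PiM S (\<lambda>_. P))"
proof (induction k)
  case 0 then show ?case by simp
next
  case (Suc k)
  define \<Phi> where "\<Phi> h = sn_iter g H (\<lambda>i h. h i) nX b \<alpha> w0 k h" for h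
  have \<Phi>m: "\<Phi> \<in> borel_measurable (PiM S (\<lambda>_. P))"
  proof -
    have "{i. fst (snd i) < k} \<subseteq> S" using Suc.prems by auto
    then show ?thesis using Suc.IH unfolding \<Phi>_def by (simp add: eta_contract_eq)
  qed
  have Sk: "(t, k, j) \<in> S" for t j using Suc.prems by auto
  define gX where "gX h = (1 / real (nX k)) *\<^sub>R (\<Sum>j<nX k. g (h (True,k,j)) (\<Phi> h))" for h
  define HS where "HS h = (1 / real b) *\<^sub>R (\<Sum>j<b. H (h (False,k,j)) (\<Phi> h))" for h
  have gXm: "gX \<in> borel_measurable (PiM S (\<lambda>_. P))"
    unfolding gX_def
    by (intro borel_measurable_scaleR borel_measurable_const borel_measurable_sum
        comp_meas[OF gm _ \<Phi>m] measurable_component_singleton Sk)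
  have HSm: "HS \<in> borel_measurable (PiM S (\<lambda>_. P))"
    unfolding HS_def
    by (intro borel_measurable_scaleR borel_measurable_const borel_measurable_sum
        comp_meas[OF Hm _ \<Phi>m] measurable_component_singleton Sk)
  have eq: "sn_iter g H (\<lambda>i h. h i) nX b \<alpha> w0 (Suc k) h = \<Phi> h - \<alpha> *\<^sub>R crm (HS h) (gX h)"
    if "h \<in> space (PiM S (\<lambda>_. P))" for h
  proof -
    have "h (False, k, j) \<in> space P" for j using that Sk by (auto simp: space_PiM)
    then have "det (HS h) \<noteq> 0" unfolding HS_def by (intro posdef)
    then show ?thesis
      by (simp add: Let_def \<Phi>_def[symmetric] gX_def[symmetric] HS_def[symmetric] crm_eq)
  qed
  show ?case
    by (subst measurable_cong[OF eq]) 
       (auto intro!: borel_measurable_diff borel_measurable_scaleR borel_measurable_const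
           crm_meas HSm gXm \<Phi>m)
qed

lemma grad_noise_bound:
  fixes P :: "'z measure" and M :: "'w measure" and Z :: "bool \<times> nat \<times> nat \<Rightarrow> 'w \<Rightarrow> 'z"
    and g :: "'z \<Rightarrow> real^'n \<Rightarrow> real^'n" and GF :: "real^'n \<Rightarrow> real^'n"
    and \<Phi> :: "(bool \<times> nat \<times> nat \<Rightarrow> 'z) \<Rightarrow> real^'n"
  assumes Mp: "prob_space M" and Pp: "prob_space P"
  and ind: "prob_space.indep_vars M (\<lambda>_. P) Z UNIV"
  and dis: "\<And>i. distr M P (Z i) = P"
  and gm: "(\<lambda>(z, w). g z w) \<in> borel_measurable (P \<Otimes>\<^sub>M borel)"
  and g_int: "\<And>w. integrable P (\<lambda>z. g z w)"
  and GF_exp: "\<And>w. GF w = (\<integral>z. g z w \<partial>P)"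
  and g_sq_int: "\<And>w. integrable P (\<lambda>z. (norm (g z w))\<^sup>2)"
  and A2: "\<And>w. tr_cov P (\<lambda>z. g z w) \<le> v\<^sup>2"
  and GFm: "GF \<in> borel_measurable borel"
  and \<Phi>m: "\<Phi> \<in> borel_measurable (PiM {i. fst (snd i) < k} (\<lambda>_. P))"
  and Wrep: "\<And>\<omega>. Wk \<omega> = \<Phi> (restrict (\<lambda>i. Z i \<omega>) {i. fst (snd i) < k})"
  and n: "n \<ge> 1"
  shows "(\<integral>\<^sup>+\<omega>. ennreal ((norm ((1/real n) *\<^sub>R (\<Sum>j<n. g (Z (True,k,j) \<omega>) (Wk \<omega>)) - GF (Wk \<omega>)))\<^sup>2) \<partial>M)
     \<le> ennreal (v\<^sup>2 / n)"
proof -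
  interpret M: prob_space M by (rule Mp)
  interpret P: prob_space P by (rule Pp)
  define A where "A = {i :: bool \<times> nat \<times> nat. fst (snd i) < k}"
  define B where "B = {i :: bool \<times> nat \<times> nat. fst (snd i) = k}"
  define SA where "SA = PiM A (\<lambda>_. P)"
  define SB where "SB = PiM B (\<lambda>_. P)"
  define U where "U \<omega> = restrict (\<lambda>i. Z i \<omega>) A" for \<omega>
  define Y where "Y \<omega> = restrict (\<lambda>i. Z i \<omega>) B" for \<omega>
  have Zm: "Z i \<in> measurable M P" for i
    using ind unfolding M.indep_vars_def by (metis UNIV_I)
  have Um: "U \<in> measurable M SA" unfolding U_def SA_def by (rule measurable_restrict) (rule Zm)
  have Ym: "Y \<in> measurable M SB" unfolding Y_def SB_def by (rule measurable_restrict) (rule Zm)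
  have iv: "M.indep_var SA U SB Y"
    unfolding SA_def SB_def U_def Y_def
    by (rule M.indep_var_restrict[OF ind]) (auto simp: A_def B_def)
  have Bk: "(True, k, j) \<in> B" for j by (simp add: B_def)
  define q where "q p = ennreal ((norm ((1/real n) *\<^sub>R (\<Sum>j<n. g (snd p (True,k,j)) (\<Phi> (fst p))) - GF (\<Phi> (fst p))))\<^sup>2)" for p
  have \<Phi>m': "(\<lambda>p. \<Phi> (fst p)) \<in> borel_measurable (SA \<Otimes>\<^sub>M SB)"
    using \<Phi>m unfolding SA_def A_def by measurable
  have cm: "(\<lambda>p. snd p (True,k,j)) \<in> measurable (SA \<Otimes>\<^sub>M SB) P" for j
    unfolding SB_def by (rule measurable_compose[OF measurable_snd measurable_component_singleton[OF Bk]])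
  have gpm: "(\<lambda>p. g (snd p (True,k,j)) (\<Phi> (fst p))) \<in> borel_measurable (SA \<Otimes>\<^sub>M SB)" for j
    by (rule comp_meas[OF gm cm \<Phi>m'])
  have GFpm: "(\<lambda>p. GF (\<Phi> (fst p))) \<in> borel_measurable (SA \<Otimes>\<^sub>M SB)"
    by (rule measurable_compose[OF \<Phi>m' GFm])
  have qm: "q \<in> borel_measurable (SA \<Otimes>\<^sub>M SB)"
    unfolding q_def using gpm GFpm by measurable
  have qrep: "ennreal ((norm ((1/real n) *\<^sub>R (\<Sum>j<n. g (Z (True,k,j) \<omega>) (Wk \<omega>)) - GF (Wk \<omega>)))\<^sup>2) = q (U \<omega>, Y \<omega>)" for \<omega>
    unfolding q_def Wrep U_def Y_def A_def by (simp add: Bk)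
  have jd: "distr M SA U \<Otimes>\<^sub>M distr M SB Y = distr M (SA \<Otimes>\<^sub>M SB) (\<lambda>x. (U x, Y x))"
    using iv by (simp add: M.indep_var_distribution_eq)
  interpret PY: prob_space "distr M SB Y" by (rule M.prob_space_distr[OF Ym])
  interpret PU: prob_space "distr M SA U" by (rule M.prob_space_distr[OF Um])
  have sets_eq: "sets (distr M SA U \<Otimes>\<^sub>M distr M SB Y) = sets (SA \<Otimes>\<^sub>M SB)"
    by (rule sets_pair_measure_cong) simp_all
  have qm': "q \<in> borel_measurable (distr M SA U \<Otimes>\<^sub>M distr M SB Y)"
    using qm measurable_cong_sets[OF sets_eq refl] by simp
  have "(\<integral>\<^sup>+\<omega>. ennreal ((norm ((1/real n) *\<^sub>R (\<Sum>j<n. g (Z (True,k,j) \<omega>) (Wk \<omega>)) - GF (Wk \<omega>)))\<^sup>2) \<partial>M)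
      = (\<integral>\<^sup>+\<omega>. q (U \<omega>, Y \<omega>) \<partial>M)" by (simp add: qrep)
  also have "\<dots> = (\<integral>\<^sup>+x. q x \<partial>distr M (SA \<Otimes>\<^sub>M SB) (\<lambda>x. (U x, Y x)))"
    by (rule nn_integral_distr[symmetric]) (auto intro: measurable_Pair Um Ym qm)
  also have "\<dots> = (\<integral>\<^sup>+x. q x \<partial>(distr M SA U \<Otimes>\<^sub>M distr M SB Y))" by (simp add: jd)
  also have "\<dots> = (\<integral>\<^sup>+u. \<integral>\<^sup>+y. q (u, y) \<partial>distr M SB Y \<partial>distr M SA U)"
    by (rule sigma_finite_measure.nn_integral_fst[symmetric, OF PY.sigma_finite_measure_axioms qm'])
  also have "\<dots> \<le> (\<integral>\<^sup>+u. ennreal (v\<^sup>2 / n) \<partial>distr M SA U)"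
  proof (rule nn_integral_mono)
    fix u assume "u \<in> space (distr M SA U)"
    then have uS: "u \<in> space SA" by simp
    define w where "w = \<Phi> u"
    have qum: "(\<lambda>y. q (u, y)) \<in> borel_measurable SB"
      using measurable_compose[OF measurable_Pair1'[OF uS] qm] by simp
    have gwm: "(\<lambda>z. g z w) \<in> borel_measurable P"
      by (rule comp_meas[OF gm measurable_ident_sets[OF refl] borel_measurable_const])
    have "(\<integral>\<^sup>+y. q (u, y) \<partial>distr M SB Y) = (\<integral>\<^sup>+\<omega>. q (u, Y \<omega>) \<partial>M)"
      by (rule nn_integral_distr[OF Ym]) (simp add: qum)
    also have "\<dots> = (\<integral>\<^sup>+\<omega>. ennreal ((norm ((1/real n) *\<^sub>R (\<Sum>j<n. g (Z ((\<lambda>j. (True,k,j)) j) \<omega>) w) - GF w))\<^sup>2) \<partial>M)"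
      unfolding q_def Y_def w_def by (simp add: Bk)
    also have "\<dots> \<le> ennreal (v\<^sup>2 / n)"
      by (rule var_mean_bound[OF Mp Pp ind dis gwm g_int g_sq_int GF_exp[symmetric] A2 _ n])
         (auto simp: inj_def)
    finally show "(\<integral>\<^sup>+y. q (u, y) \<partial>distr M SB Y) \<le> ennreal (v\<^sup>2 / n)" .
  qed
  also have "\<dots> = ennreal (v\<^sup>2 / n)"
  proof -
    have "emeasure (distr M SA U) (space SA) = 1" using PU.emeasure_space_1 by simp
    then show ?thesis by simp
  qed
  finally show ?thesis .
qed

theorem theorem2p1:
  fixes P :: "'z measure"                       \<comment> \<open>distribution of input-output pairs\<close>
    and f :: "'z \<Rightarrow> real^'n \<Rightarrow> real"          \<comment> \<open>loss f(w;x,y), written f z w\<close>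
    and g :: "'z \<Rightarrow> real^'n \<Rightarrow> real^'n"      \<comment> \<open>gradient of f z\<close>
    and H :: "'z \<Rightarrow> real^'n \<Rightarrow> real^'n^'n"   \<comment> \<open>Hessian of f z\<close>
    and F :: "real^'n \<Rightarrow> real" and GF :: "real^'n \<Rightarrow> real^'n" and HF :: "real^'n \<Rightarrow> real^'n^'n"
    and M :: "'w measure" and Z :: "bool \<times> nat \<times> nat \<Rightarrow> 'w \<Rightarrow> 'z"
    and mub Lb :: "nat \<Rightarrow> real" and mu L v \<eta> :: real and b :: nat
    and w0 wstar :: "real^'n"
  assumes P_prob: "prob_space P"
    \<comment> \<open>smooth loss\<close>
    and f_grad: "\<And>z w. (f z has_derivative (\<lambda>h. g z w \<bullet> h)) (at w)"
    and f_hess: "\<And>z w. (g z has_derivative (\<lambda>h. H z w *v h)) (at w)"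
    and H_cont: "\<And>z. continuous_on UNIV (H z)"
    and g_meas: "(\<lambda>(z, w). g z w) \<in> borel_measurable (P \<Otimes>\<^sub>M borel)"
    and H_meas: "(\<lambda>(z, w). H z w) \<in> borel_measurable (P \<Otimes>\<^sub>M borel)"
    \<comment> \<open>expected risk and its derivatives\<close>
    and f_int: "\<And>w. integrable P (\<lambda>z. f z w)"
    and F_def: "\<And>w. F w = (\<integral>z. f z w \<partial>P)"
    and F_grad: "\<And>w. (F has_derivative (\<lambda>h. GF w \<bullet> h)) (at w)"
    and F_hess: "\<And>w. (GF has_derivative (\<lambda>h. HF w *v h)) (at w)"
    and HF_cont: "continuous_on UNIV HF"
    and g_int: "\<And>w. integrable P (\<lambda>z. g z w)"
    and GF_exp: "\<And>w. GF w = (\<integral>z. g z w \<partial>P)"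
    and H_int: "\<And>w. integrable P (\<lambda>z. H z w)"
    and HF_exp: "\<And>w. HF w = (\<integral>z. H z w \<partial>P)"
    \<comment> \<open>w* is the minimizer of F\<close>
    and wstar_min: "\<And>w. F wstar \<le> F w"
    \<comment> \<open>Assumption A1\<close>
    and A1_sub: "\<And>\<beta> zs w. \<beta> \<ge> 1 \<Longrightarrow> length zs = \<beta> \<Longrightarrow> set zs \<subseteq> space P \<Longrightarrow>
        loewner_le (mub \<beta> *\<^sub>R mat 1) ((1 / real \<beta>) *\<^sub>R sum_list (map (\<lambda>z. H z w) zs)) \<and>
        loewner_le ((1 / real \<beta>) *\<^sub>R sum_list (map (\<lambda>z. H z w) zs)) (Lb \<beta> *\<^sub>R mat 1)"
    and A1_const: "\<And>\<beta>. \<beta> \<ge> 1 \<Longrightarrow> 0 < mub \<beta> \<and> mub \<beta> \<le> Lb \<beta>"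
    and A1_unif: "\<exists>mubar Lbar. 0 < mubar \<and> (\<forall>\<beta>\<ge>1. mubar \<le> mub \<beta> \<and> Lb \<beta> \<le> Lbar)"
    and A1_F: "\<And>w. loewner_le (mu *\<^sub>R mat 1) (HF w) \<and> loewner_le (HF w) (L *\<^sub>R mat 1)"
    and mu_pos: "0 < mu" and mu_le_L: "mu \<le> L"
    \<comment> \<open>Assumption A2\<close>
    and g_sq_int: "\<And>w. integrable P (\<lambda>z. (norm (g z w))\<^sup>2)"
    and A2: "\<And>w. tr_cov P (\<lambda>z. g z w) \<le> v\<^sup>2"
    \<comment> \<open>independent sample points drawn from P\<close>
    and M_prob: "prob_space M"
    and Z_indep: "prob_space.indep_vars M (\<lambda>_. P) Z UNIV"
    and Z_distr: "\<And>i. distr M P (Z i) = P"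
    \<comment> \<open>sample sizes and steplength\<close>
    and eta_gt: "\<eta> > 1"
    and b_ge: "b \<ge> 1"
  shows "\<forall>k. (\<integral>\<^sup>+ \<omega>. ennreal (F (sn_iter g H Z (\<lambda>k. nat \<lceil>\<eta> ^ k\<rceil>) b (mub b / L) w0 k \<omega>) - F wstar) \<partial>M)
           \<le> ennreal (max (F w0 - F wstar) (v\<^sup>2 * Lb b / (mu * mub b))
                      * (max (1 - mu * mub b / (2 * L * Lb b)) (1 / \<eta>)) ^ k)"
proof -
  interpret M: prob_space M by (rule M_prob)
  interpret Pp: prob_space P by (rule P_prob)
  define nX where "nX = (\<lambda>k::nat. nat \<lceil>\<eta> ^ k\<rceil>)"
  define \<alpha> where "\<alpha> = mub b / L"
  define W where "W k \<omega> = sn_iter g H Z nX b \<alpha> w0 k \<omega>" for k \<omega>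
  define \<Phi> where "\<Phi> k h = sn_iter g H (\<lambda>i h. h i) nX b \<alpha> w0 k h" for k h
  define c where "c = mu * mub b / (L * Lb b)"
  define C where "C = max (F w0 - F wstar) (v\<^sup>2 * Lb b / (mu * mub b))"
  define \<rho> where "\<rho> = max (1 - mu * mub b / (2 * L * Lb b)) (1 / \<eta>)"
  have L: "L > 0" using mu_pos mu_le_L by linarith
  have mb: "mub b > 0" "mub b \<le> Lb b" using A1_const[OF b_ge] by auto
  have Lbb: "Lb b > 0" using mb by linarith
  have Zm: "Z i \<in> measurable M P" for i
    using Z_indep unfolding M.indep_vars_def by (metis UNIV_I)
  have HSb: "transpose A = A \<and> (\<forall>u. mub b * (u \<bullet> u) \<le> u \<bullet> (A *v u)) \<and> (\<forall>u. u \<bullet> (A *v u) \<le> Lb b * (u \<bullet> u))"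
    if A: "A = (1/real b) *\<^sub>R (\<Sum>j<b. H (f j) w)" and f: "\<And>j. j < b \<Longrightarrow> f j \<in> space P" for A f w
  proof -
    define zs where "zs = map f [0..<b]"
    have zl: "length zs = b" "set zs \<subseteq> space P" using f by (auto simp: zs_def)
    have se: "sum_list (map (\<lambda>z. H z w) zs) = (\<Sum>j<b. H (f j) w)"
      by (simp add: zs_def interv_sum_list_conv_sum_set_nat atLeast0LessThan o_def)
    from A1_sub[OF b_ge zl, of w] have l: "loewner_le (mub b *\<^sub>R mat 1) A" and u: "loewner_le A (Lb b *\<^sub>R mat 1)"
      unfolding se A by auto
    show ?thesis using loewner_lowerD[OF l] loewner_upperD[OF u] by auto
  qed
  have HSdet: "det A \<noteq> 0"
    if A: "A = (1/real b) *\<^sub>R (\<Sum>j<b. H (f j) w)" and f: "\<And>j. j < b \<Longrightarrow> f j \<in> space P" for A f w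
  proof -
    have lb: "mub b * (u \<bullet> u) \<le> u \<bullet> (A *v u)" for u using HSb[OF A f] by auto
    have "\<forall>x. A *v x = 0 \<longrightarrow> x = 0"
    proof (intro allI impI)
      fix x assume "A *v x = 0"
      then have "mub b * (x \<bullet> x) \<le> 0" using lb[of x] by simp
      then have "x \<bullet> x \<le> 0" using mb(1) by (simp add: mult_le_0_iff)
      then show "x = 0" using inner_gt_zero_iff[of x] by linarith
    qed
    then have "invertible A"
      using matrix_left_invertible_ker invertible_left_inverse by blast
    then show ?thesis by (simp add: invertible_det_nz)
  qed
  have HFlb: "mu * (u \<bullet> u) \<le> u \<bullet> (HF x *v u)" for x u
    using A1_F[of x] loewner_lowerD by blast
  have HFub: "u \<bullet> (HF x *v u) \<le> L * (u \<bullet> u)" for x u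
    using A1_F[of x] loewner_upperD by blast
  have \<Phi>m: "\<Phi> k \<in> borel_measurable (PiM {i. fst (snd i) < k} (\<lambda>_. P))" for k
    unfolding \<Phi>_def
  proof (rule Phi_meas[OF g_meas H_meas])
    fix f w assume "\<And>j. j < b \<Longrightarrow> f j \<in> space P"
    then show "det ((1/real b) *\<^sub>R (\<Sum>j<b. H (f j) w)) \<noteq> 0" by (rule HSdet[OF refl])
  qed simp
  have Wrep: "W k \<omega> = \<Phi> k (restrict (\<lambda>i. Z i \<omega>) {i. fst (snd i) < k})" for k \<omega>
    unfolding W_def \<Phi>_def by (rule sn_iter_dep) simp
  have Wm: "W k \<in> borel_measurable M" for k
  proof -
    have "W k = (\<lambda>\<omega>. \<Phi> k (restrict (\<lambda>i. Z i \<omega>) {i. fst (snd i) < k}))" by (simp add: fun_eq_iff Wrep)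
    also have "\<dots> \<in> borel_measurable M"
      by (rule measurable_compose[OF measurable_restrict[OF Zm] \<Phi>m])
    finally show ?thesis .
  qed
  have Fm: "F \<in> borel_measurable borel"
    by (rule borel_measurable_continuous_onI, rule continuous_at_imp_continuous_on)
       (use has_derivative_continuous[OF F_grad] in blast)
  have GFm: "GF \<in> borel_measurable borel"
    by (rule borel_measurable_continuous_onI, rule continuous_at_imp_continuous_on)
       (use has_derivative_continuous[OF F_hess] in blast)
  have nX1: "nX k \<ge> 1" for k
  proof -
    have "1 \<le> \<eta> ^ k" using eta_gt by (simp add: one_le_power)
    then have "1 \<le> \<lceil>\<eta> ^ k\<rceil>" by linarith
    then show ?thesis unfolding nX_def by linarith
  qed
  define e where "e k \<omega> = (1/real (nX k)) *\<^sub>R (\<Sum>j<nX k. g (Z (True,k,j) \<omega>) (W k \<omega>)) - GF (W k \<omega>)" for k \<omega>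
  have step1: "F (W (Suc k) \<omega>) - F wstar \<le> (1 - c) * (F (W k \<omega>) - F wstar) + (norm (e k \<omega>))\<^sup>2 / (2*L)"
    if \<omega>: "\<omega> \<in> space M" for k \<omega>
  proof -
    define HS where "HS = (1/real b) *\<^sub>R (\<Sum>j<b. H (Z (False,k,j) \<omega>) (W k \<omega>))"
    define gX where "gX = (1/real (nX k)) *\<^sub>R (\<Sum>j<nX k. g (Z (True,k,j) \<omega>) (W k \<omega>))"
    have sp: "Z (False,k,j) \<omega> \<in> space P" for j using measurable_space[OF Zm \<omega>] .
    have hb: "transpose HS = HS \<and> (\<forall>u. mub b * (u \<bullet> u) \<le> u \<bullet> (HS *v u)) \<and> (\<forall>u. u \<bullet> (HS *v u) \<le> Lb b * (u \<bullet> u))"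
      by (rule HSb[OF HS_def sp])
    have inv: "invertible HS" using HSdet[OF HS_def sp] by (simp add: invertible_det_nz)
    have W1: "W (Suc k) \<omega> = W k \<omega> - (mub b / L) *\<^sub>R (matrix_inv HS *v gX)"
      by (simp add: W_def Let_def HS_def gX_def \<alpha>_def)
    have "F (W k \<omega> - (mub b / L) *\<^sub>R (matrix_inv HS *v gX)) - F wstar
      \<le> (1 - mu * mub b / (L * Lb b)) * (F (W k \<omega>) - F wstar) + (gX - GF (W k \<omega>)) \<bullet> (gX - GF (W k \<omega>)) / (2 * L)"
      by (rule step_ineq[OF F_grad F_hess HFlb HFub mu_pos L wstar_min _ _ mb(1) _ Lbb inv]) (use hb in auto)
    then show ?thesis unfolding W1 c_def e_def gX_def[symmetric] by (simp add: power2_norm_eq_inner)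
  qed
  have step3: "(\<integral>\<^sup>+\<omega>. ennreal ((norm (e k \<omega>))\<^sup>2) \<partial>M) \<le> ennreal (v\<^sup>2 / nX k)" for k
    unfolding e_def
    by (rule grad_noise_bound[OF M_prob P_prob Z_indep Z_distr g_meas g_int GF_exp g_sq_int A2 GFm \<Phi>m Wrep nX1])
  have em: "(\<lambda>\<omega>. ennreal ((norm (e k \<omega>))\<^sup>2)) \<in> borel_measurable M" for k
  proof -
    have "(\<lambda>\<omega>. g (Z (True,k,j) \<omega>) (W k \<omega>)) \<in> borel_measurable M" for j
      by (rule comp_meas[OF g_meas Zm Wm])
    moreover have "(\<lambda>\<omega>. GF (W k \<omega>)) \<in> borel_measurable M"
      by (rule measurable_compose[OF Wm GFm])
    ultimately show ?thesis unfolding e_def by measurable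
  qed
  have Fwm: "(\<lambda>\<omega>. ennreal (F (W k \<omega>) - F wstar)) \<in> borel_measurable M" for k
  proof -
    have "(\<lambda>\<omega>. F (W k \<omega>)) \<in> borel_measurable M" by (rule measurable_compose[OF Wm Fm])
    then show ?thesis by measurable
  qed
  have c: "0 < c" "c \<le> 1"
  proof -
    show "0 < c" unfolding c_def using mu_pos mb L Lbb by simp
    have "mu * mub b \<le> L * Lb b" using mu_pos mu_le_L mb by (intro mult_mono) auto
    then show "c \<le> 1" unfolding c_def using L Lbb by simp
  qed
  have C0: "C \<ge> 0" unfolding C_def using wstar_min[of w0] by simp
  have \<rho>: "1 / \<eta> \<le> \<rho>" "1 - c/2 \<le> \<rho>" "0 \<le> \<rho>"
  proof -
    show "1 / \<eta> \<le> \<rho>" unfolding \<rho>_def by simp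
    show "1 - c/2 \<le> \<rho>" unfolding \<rho>_def c_def by simp
    then show "0 \<le> \<rho>" using c by linarith
  qed
  define E where "E k = (\<integral>\<^sup>+\<omega>. ennreal (F (W k \<omega>) - F wstar) \<partial>M)" for k
  have main: "E k \<le> ennreal (C * \<rho> ^ k)" for k
  proof (induction k)
    case 0
    have "E 0 = ennreal (F w0 - F wstar)"
      unfolding E_def W_def by (simp add: M.emeasure_space_1)
    also have "\<dots> \<le> ennreal (C * \<rho> ^ 0)" unfolding C_def by (intro ennreal_leI) simp
    finally show ?case .
  next
    case (Suc k)
    have pw: "ennreal (F (W (Suc k) \<omega>) - F wstar) \<le> ennreal (1 - c) * ennreal (F (W k \<omega>) - F wstar) + ennreal (1/(2*L)) * ennreal ((norm (e k \<omega>))\<^sup>2)"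
      if "\<omega> \<in> space M" for \<omega>
    proof -
      have a: "0 \<le> F (W k \<omega>) - F wstar" using wstar_min by simp
      have "ennreal (1 - c) * ennreal (F (W k \<omega>) - F wstar) + ennreal (1/(2*L)) * ennreal ((norm (e k \<omega>))\<^sup>2)
         = ennreal ((1 - c) * (F (W k \<omega>) - F wstar) + (norm (e k \<omega>))\<^sup>2 / (2*L))"
      proof -
        have e1: "ennreal (1 - c) * ennreal (F (W k \<omega>) - F wstar) = ennreal ((1 - c) * (F (W k \<omega>) - F wstar))"
          by (rule ennreal_mult[symmetric]) (use a c in auto)
        have e2: "ennreal (1/(2*L)) * ennreal ((norm (e k \<omega>))\<^sup>2) = ennreal ((norm (e k \<omega>))\<^sup>2 / (2*L))"
          using ennreal_mult[of "1/(2*L)" "(norm (e k \<omega>))\<^sup>2"] L by simp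
        show ?thesis unfolding e1 e2 using a c L by (intro ennreal_plus[symmetric]) auto
      qed
      then show ?thesis using step1[OF that] by (simp add: ennreal_leI)
    qed
    have "E (Suc k) \<le> (\<integral>\<^sup>+\<omega>. ennreal (1 - c) * ennreal (F (W k \<omega>) - F wstar) + ennreal (1/(2*L)) * ennreal ((norm (e k \<omega>))\<^sup>2) \<partial>M)"
      unfolding E_def by (rule nn_integral_mono) (rule pw)
    also have "\<dots> = ennreal (1 - c) * E k + ennreal (1/(2*L)) * (\<integral>\<^sup>+\<omega>. ennreal ((norm (e k \<omega>))\<^sup>2) \<partial>M)"
      unfolding E_def using Fwm em
      by (simp add: nn_integral_add nn_integral_cmult)
    also have "\<dots> \<le> ennreal (1 - c) * ennreal (C * \<rho> ^ k) + ennreal (1/(2*L)) * ennreal (v\<^sup>2 / nX k)"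
      by (intro add_mono mult_left_mono Suc.IH step3) auto
    also have "\<dots> = ennreal ((1 - c) * (C * \<rho> ^ k) + 1/(2*L) * (v\<^sup>2 / nX k))"
    proof -
      have e1: "ennreal (1 - c) * ennreal (C * \<rho> ^ k) = ennreal ((1 - c) * (C * \<rho> ^ k))"
        by (rule ennreal_mult[symmetric]) (use c C0 \<rho> in auto)
      have e2: "ennreal (1/(2*L)) * ennreal (v\<^sup>2 / nX k) = ennreal (1/(2*L) * (v\<^sup>2 / nX k))"
        by (rule ennreal_mult[symmetric]) (use L in auto)
      show ?thesis unfolding e1 e2 using c L C0 \<rho> by (intro ennreal_plus[symmetric]) auto
    qed
    also have "\<dots> \<le> ennreal (C * \<rho> ^ Suc k)"
    proof (rule ennreal_leI)
      have n: "\<eta> ^ k \<le> real (nX k)" unfolding nX_def by (rule real_nat_ceiling_ge)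
      have ep: "\<eta> ^ k > 0" using eta_gt by simp
      have "1 / real (nX k) \<le> 1 / \<eta> ^ k" using n ep by (intro divide_left_mono) auto
      also have "\<dots> = (1/\<eta>) ^ k" by (simp add: power_one_over)
      also have "\<dots> \<le> \<rho> ^ k" using \<rho> eta_gt by (intro power_mono) auto
      finally have n1: "1 / real (nX k) \<le> \<rho> ^ k" .
      have Cc: "v\<^sup>2 / (2*L) \<le> C * c / 2"
      proof -
        have "v\<^sup>2 * Lb b / (mu * mub b) \<le> C" unfolding C_def by simp
        then have "v\<^sup>2 * Lb b / (mu * mub b) * c \<le> C * c" using c by (intro mult_right_mono) auto
        moreover have "v\<^sup>2 * Lb b / (mu * mub b) * c = v\<^sup>2 / L"
          unfolding c_def using mu_pos mb Lbb L by (simp add: field_simps)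
        ultimately have "v\<^sup>2 / L \<le> C * c" by simp
        moreover have "v\<^sup>2 / (2*L) = (v\<^sup>2 / L) / 2" by simp
        ultimately show ?thesis by linarith
      qed
      have "1/(2*L) * (v\<^sup>2 / nX k) = v\<^sup>2 / (2*L) * (1 / real (nX k))" by simp
      also have "\<dots> \<le> C * c / 2 * \<rho> ^ k"
        using Cc n1 C0 c \<rho> by (intro mult_mono) auto
      finally have t2: "1/(2*L) * (v\<^sup>2 / nX k) \<le> C * c / 2 * \<rho> ^ k" .
      have "(1 - c) * (C * \<rho> ^ k) + C * c / 2 * \<rho> ^ k = (C * \<rho> ^ k) * (1 - c/2)"
        by (simp add: algebra_simps)
      also have "\<dots> \<le> (C * \<rho> ^ k) * \<rho>"
        using C0 \<rho> by (intro mult_left_mono) auto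
      also have "\<dots> = C * \<rho> ^ Suc k" by simp
      finally show "(1 - c) * (C * \<rho> ^ k) + 1/(2*L) * (v\<^sup>2 / nX k) \<le> C * \<rho> ^ Suc k"
        using t2 by linarith
    qed
    finally show ?case .
  qed
  show ?thesis
    using main unfolding E_def W_def nX_def \<alpha>_def C_def \<rho>_def by blast
qed

end
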